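(* For every $z_j\in Z_\theta$ and every $t=0,1,\dots,T-2$, $\bar\omega_t(z_j)\le U^\omega_t(z_j)\le\bar U^\omega_t(\theta)$, where, with $\mu_t(0)=z_j$ and $\mu_t(i)=\max(\mu_t(i-1),S^U_{t+i-1})+\theta$ for $i=1,\dots,T-2-t$, $$U^\omega_t(z_j)=\theta\sum_{i=0}^{T-2-t}\alpha^i\gamma_{t+i}+\theta\sum_{i=0}^{T-2-t}\sum_{n=1}^{T-1-t-i}\alpha^{n+i}\gamma_{t+i+n}\Big[\prod_{m=0}^{n-1}F_{t+i+m}\big(S^U_{t+i}+(m+1)\theta-s_{t+i+m+1}\big)+\prod_{m=0}^{n-1}F_{t+i+m}\big(\max(\mu_t(i),S^U_{t+i})+(m+1)\theta-s_{t+i+m+1}\big)\Big],$$ $$\bar U^\omega_t(\theta)=\theta\sum_{i=0}^{T-2-t}\alpha^i\gamma_{t+i}+2\theta\sum_{i=0}^{T-2-t}\sum_{n=1}^{T-1-t-i}\alpha^{n+i}\gamma_{t+i+n}.$$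
   Context: Model. Fix an integer horizon $T\ge 2$, a discount factor $\alpha\in(0,1]$, and for $t=0,\dots,T-1$: unit ordering costs $c_t\in\mathbb R$, a salvage coefficient $c_T\in\mathbb R$, setup costs $K_t\ge 0$, functions $G_t:\mathbb R\to\mathbb R$, and independent nonnegative random demands $D_0,\dots,D_{T-1}$ with right-continuous distribution functions $F_t$ and finite means; all expectations appearing are assumed finite. Put $C_t(y)=(c_t-\alpha c_{t+1})y+G_t(y)+\alpha c_{t+1}E[D_t]$. Standing assumptions: (i) each $C_t$ is convex with $C_t(y)\to+\infty$ as $|y|\to\infty$; (ii) $K_t\ge \alpha K_{t+1}$ for $t=0,\dots,T-2$; (iii) there are constants $\gamma_t\ge 0$ with $|C_t(x)-C_t(y)|\le\gamma_t|x-y|$ for all $x,y$. Grid construction. Fix $\theta>0$, $z_m=m\theta$, $Z_\theta=\{z_m:m\in\mathbb Z\}$, $f_t(n)=F_t(z_{n+1})-F_t(z_n)$ ($n\ge -1$). $C^m_t=\min\{y: C_t(y)=\min_x C_t(x)\}$; with $z_{n_0}<C^m_t\le z_{n_0+1}$, $S^U_t=\min\{z_m\in Z_\theta: z_m\ge C^m_t,\ C_t(z_m)>C_t(z_{n_0})+K_t\}$. $s_{T-1}$ is a point with $s_{T-1}\le C^m_{T-1}$, $C_{T-1}(s_{T-1})=C_{T-1}(C^m_{T-1})+K_{T-1}$; $\bar I_{T-1}=s_{T-1}$. For $t=T-2,\dots,0$: $I_t=\max\{z_m\in Z_\theta: z_m<\min(\bar I_{t+1}-\theta,C^m_t)\}$,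 $\bar I_t=\max\{z_m\in Z_\theta: z_m\le I_t,\ C_t(z_m)>C_t(I_t)+K_t\}+\theta$. $H_{T-1}=C_{T-1}$, $S_{T-1}=C^m_{T-1}$; $V_t(y)=H_t(S_t)+K_t$ for $y<s_t$, $V_t(y)=H_t(y)$ for $y\ge s_t$. For $t=T-2,\dots,0$: $H_t(y)=C_t(y)+\alpha\sum_{n=-1}^\infty V_{t+1}(y-z_n)f_t(n)$; $S_t=\max\{z_m\in Z_\theta: I_t\le z_m\le S^U_t,\ H_t(z_m)=\min\{H_t(z_n):z_n\in Z_\theta, I_t\le z_n\le S^U_t\}\}$; $s_t=S_t$ if $K_t=0$, else $s_t=\min\{z_m\in Z_\theta:\bar I_t\le z_m\le S_t,\ H_t(z_m)\le H_t(S_t)+K_t\}$. Estimate functions. $\psi_{T-1}(x,y)=\bar\psi_{T-1}(x,y)=\gamma_{T-1}x$; $\varphi_{T-1}(x,y)=\bar\varphi_{T-1}(x,y)=0$ if $y<s_{T-1}$ and $=\gamma_{T-1}x$ if $y\ge s_{T-1}$. For $t=0,\dots,T-2$, with $n$ the integer such that $z_{n-1}\le y-s_{t+1}<z_n$: $\psi_t(x,y)=\gamma_tx$ if $y<s_{t+1}-\theta$, else $\psi_t(x,y)=\gamma_tx+\alpha\sum_{m=-1}^{n-1}\varphi_{t+1}(x,y-z_m)f_t(m)$; $\varphi_t(x,y)=0$ if $y<s_t$, $=\psi_t(y-s_t,y)$ if $y\ge s_t$ and $y-x<s_t$, $=\psi_t(x,y)$ if $y\ge s_t$ and $y-x\ge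 s_t$. Likewise $\bar\psi_t(x,y)=\gamma_tx$ if $y<s_{t+1}-\theta$, else $\bar\psi_t(x,y)=\gamma_tx+\alpha\sum_{m=-1}^{n-1}\bar\varphi_{t+1}(x,y-z_m)f_t(m)$; $\bar\varphi_t(x,y)=0$ if $y<s_t$, $=\bar\psi_t(y-s_t+\theta,y)$ if $y\ge s_t$ and $y-x<s_t$, $=\bar\psi_t(x,y)$ if $y\ge s_t$ and $y-x\ge s_t$. Error-bound functions. $\omega_{T-1}\equiv\bar\omega_{T-1}\equiv 0$, $\eta_{T-1}=0$. For $t=T-2,\dots,0$: $\omega_t(x)=\psi_t(\theta,x)-\gamma_t\theta+\alpha\sum_{n=-1}^\infty\bar\omega_{t+1}(x-z_n)f_t(n)$; $\eta_t=\bar\psi_t(\theta,S^U_t)+\omega_t(S^U_t)$; $\bar\omega_t(x)=\eta_t$ if $x\le S^U_t$ and $\bar\omega_t(x)=\max(\eta_t,\omega_t(x))$ if $x>S^U_t$. *)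

theory Defs
  imports "HOL-Probability.Probability"
begin

text \<open>Data of the finite-horizon inventory model (horizon T, discount alpha,
  unit costs c_0..c_T, setup costs K_t, functions G_t, demand distributions D_t
  (as probability measures on the reals), Lipschitz constants gamma_t, grid step theta).\<close>

record inv_data =
  T     :: nat
  alpha :: real
  c     :: "nat \<Rightarrow> real"
  K     :: "nat \<Rightarrow> real"
  G     :: "nat \<Rightarrow> real \<Rightarrow> real"
  dem   :: "nat \<Rightarrow> real measure"
  gam   :: "nat \<Rightarrow> real"
  theta :: real

definition F :: "inv_data \<Rightarrow> nat \<Rightarrow> real \<Rightarrow> real" where
  "F P t x = measure (dem P t) {..x}"

definition ED :: "inv_data \<Rightarrow> nat \<Rightarrow> real" where
  "ED P t = integral\<^sup>L (dem P t) (\<lambda>x. x)"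

definition C :: "inv_data \<Rightarrow> nat \<Rightarrow> real \<Rightarrow> real" where
  "C P t y = (c P t - alpha P * c P (Suc t)) * y + G P t y + alpha P * c P (Suc t) * ED P t"

definition z :: "inv_data \<Rightarrow> int \<Rightarrow> real" where
  "z P m = real_of_int m * theta P"

definition f :: "inv_data \<Rightarrow> nat \<Rightarrow> int \<Rightarrow> real" where
  "f P t n = F P t (z P (n + 1)) - F P t (z P n)"

definition Cm :: "inv_data \<Rightarrow> nat \<Rightarrow> real" where
  "Cm P t = (LEAST y. \<forall>x. C P t y \<le> C P t x)"

definition n0 :: "inv_data \<Rightarrow> nat \<Rightarrow> int" where
  "n0 P t = (THE n. z P n < Cm P t \<and> Cm P t \<le> z P (n + 1))"

definition SU :: "inv_data \<Rightarrow> nat \<Rightarrow> real" where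
  "SU P t = z P (LEAST m. z P m \<ge> Cm P t \<and> C P t (z P m) > C P t (z P (n0 P t)) + K P t)"

definition sT1 :: "inv_data \<Rightarrow> real" where
  "sT1 P = (THE s. s \<le> Cm P (T P - 1) \<and>
     C P (T P - 1) s = C P (T P - 1) (Cm P (T P - 1)) + K P (T P - 1))"

definition Istep :: "inv_data \<Rightarrow> nat \<Rightarrow> real \<Rightarrow> real" where
  "Istep P t ib = z P (GREATEST m. z P m < min (ib - theta P) (Cm P t))"

function Ibar :: "inv_data \<Rightarrow> nat \<Rightarrow> real" where
  "Ibar P t = (if T P - 1 \<le> t then sT1 P
     else (let I = Istep P t (Ibar P (Suc t))
           in z P (GREATEST m. z P m \<le> I \<and> C P t (z P m) > C P t I + K P t) + theta P))"
  by pat_completeness auto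
termination by (relation "Wellfounded.measure (\<lambda>(P, t). T P - t)") auto

definition Ival :: "inv_data \<Rightarrow> nat \<Rightarrow> real" where
  "Ival P t = Istep P t (Ibar P (Suc t))"

text \<open>Backward recursion returning (H_t, S_t, s_t); V_{t+1} is built from the triple at t+1.
  Sums over n \<ge> -1 are written with n = int k - 1, k a natural number.\<close>
function HSs :: "inv_data \<Rightarrow> nat \<Rightarrow> (real \<Rightarrow> real) \<times> real \<times> real" where
  "HSs P t = (if T P - 1 \<le> t then (C P (T P - 1), Cm P (T P - 1), sT1 P)
     else (let R = HSs P (Suc t); H' = fst R; S' = fst (snd R); s' = snd (snd R);
       V = (\<lambda>y. if y < s' then H' S' + K P (Suc t) else H' y);
       H = (\<lambda>y. C P t y + alpha P * (\<Sum>k. V (y - z P (int k - 1)) * f P t (int k - 1)));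
       S = z P (GREATEST m. Ival P t \<le> z P m \<and> z P m \<le> SU P t \<and>
              (\<forall>n. Ival P t \<le> z P n \<and> z P n \<le> SU P t \<longrightarrow> H (z P m) \<le> H (z P n)));
       s = (if K P t = 0 then S
            else z P (LEAST m. Ibar P t \<le> z P m \<and> z P m \<le> S \<and> H (z P m) \<le> H S + K P t))
     in (H, S, s)))"
  by pat_completeness auto
termination by (relation "Wellfounded.measure (\<lambda>(P, t). T P - t)") auto

definition H :: "inv_data \<Rightarrow> nat \<Rightarrow> real \<Rightarrow> real" where
  "H P t = fst (HSs P t)"

definition S :: "inv_data \<Rightarrow> nat \<Rightarrow> real" where
  "S P t = fst (snd (HSs P t))"

definition s :: "inv_data \<Rightarrow> nat \<Rightarrow> real" where
  "s P t = snd (snd (HSs P t))"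

definition V :: "inv_data \<Rightarrow> nat \<Rightarrow> real \<Rightarrow> real" where
  "V P t y = (if y < s P t then H P t (S P t) + K P t else H P t y)"

definition nidx :: "inv_data \<Rightarrow> nat \<Rightarrow> real \<Rightarrow> int" where
  "nidx P t y = (THE n. z P (n - 1) \<le> y - s P (Suc t) \<and> y - s P (Suc t) < z P n)"

definition psi_step :: "inv_data \<Rightarrow> nat \<Rightarrow> (real \<Rightarrow> real \<Rightarrow> real) \<Rightarrow> real \<Rightarrow> real \<Rightarrow> real" where
  "psi_step P t ph x y = (if y < s P (Suc t) - theta P then gam P t * x
     else gam P t * x + alpha P * (\<Sum>m\<in>{-1..nidx P t y - 1}. ph x (y - z P m) * f P t m))"

text \<open>phiG P 0 = phi, phiG P theta = phibar (they differ only in the shift e).\<close>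
function phiG :: "inv_data \<Rightarrow> real \<Rightarrow> nat \<Rightarrow> real \<Rightarrow> real \<Rightarrow> real" where
  "phiG P e t = (if T P - 1 \<le> t then
       (\<lambda>x y. if y < s P (T P - 1) then 0 else gam P (T P - 1) * x)
     else (\<lambda>x y. if y < s P t then 0
       else if y - x < s P t then psi_step P t (phiG P e (Suc t)) (y - s P t + e) y
       else psi_step P t (phiG P e (Suc t)) x y))"
  by pat_completeness auto
termination by (relation "Wellfounded.measure (\<lambda>(P, e, t). T P - t)") auto

definition phi :: "inv_data \<Rightarrow> nat \<Rightarrow> real \<Rightarrow> real \<Rightarrow> real" where
  "phi P t = phiG P 0 t"

definition phibar :: "inv_data \<Rightarrow> nat \<Rightarrow> real \<Rightarrow> real \<Rightarrow> real" where
  "phibar P t = phiG P (theta P) t"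

definition psi :: "inv_data \<Rightarrow> nat \<Rightarrow> real \<Rightarrow> real \<Rightarrow> real" where
  "psi P t x y = (if T P - 1 \<le> t then gam P t * x else psi_step P t (phi P (Suc t)) x y)"

definition psibar :: "inv_data \<Rightarrow> nat \<Rightarrow> real \<Rightarrow> real \<Rightarrow> real" where
  "psibar P t x y = (if T P - 1 \<le> t then gam P t * x else psi_step P t (phibar P (Suc t)) x y)"

definition omega_step :: "inv_data \<Rightarrow> nat \<Rightarrow> (real \<Rightarrow> real) \<Rightarrow> real \<Rightarrow> real" where
  "omega_step P t ob x = psi P t (theta P) x - gam P t * theta P
     + alpha P * (\<Sum>k. ob (x - z P (int k - 1)) * f P t (int k - 1))"

function omegabar :: "inv_data \<Rightarrow> nat \<Rightarrow> real \<Rightarrow> real" where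
  "omegabar P t = (if T P - 1 \<le> t then (\<lambda>x. 0)
     else (let om = omega_step P t (omegabar P (Suc t));
               eta = psibar P t (theta P) (SU P t) + om (SU P t)
           in (\<lambda>x. if x \<le> SU P t then eta else max eta (om x))))"
  by pat_completeness auto
termination by (relation "Wellfounded.measure (\<lambda>(P, t). T P - t)") auto

definition omega :: "inv_data \<Rightarrow> nat \<Rightarrow> real \<Rightarrow> real" where
  "omega P t = (if T P - 1 \<le> t then (\<lambda>x. 0) else omega_step P t (omegabar P (Suc t)))"

definition eta :: "inv_data \<Rightarrow> nat \<Rightarrow> real" where
  "eta P t = (if T P - 1 \<le> t then 0 else psibar P t (theta P) (SU P t) + omega P t (SU P t))"

primrec mu :: "inv_data \<Rightarrow> nat \<Rightarrow> int \<Rightarrow> nat \<Rightarrow> real" where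
  "mu P t j 0 = z P j"
| "mu P t j (Suc i) = max (mu P t j i) (SU P (t + i)) + theta P"

definition U_omega :: "inv_data \<Rightarrow> nat \<Rightarrow> int \<Rightarrow> real" where
  "U_omega P t j =
     theta P * (\<Sum>i=0..T P - 2 - t. alpha P ^ i * gam P (t + i))
   + theta P * (\<Sum>i=0..T P - 2 - t. \<Sum>n=1..T P - 1 - t - i.
        alpha P ^ (n + i) * gam P (t + i + n) *
        ((\<Prod>m=0..n - 1. F P (t + i + m) (SU P (t + i) + real (m + 1) * theta P - s P (t + i + m + 1)))
       + (\<Prod>m=0..n - 1. F P (t + i + m)
            (max (mu P t j i) (SU P (t + i)) + real (m + 1) * theta P - s P (t + i + m + 1)))))"

definition Ubar_omega :: "inv_data \<Rightarrow> nat \<Rightarrow> real" where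
  "Ubar_omega P t =
     theta P * (\<Sum>i=0..T P - 2 - t. alpha P ^ i * gam P (t + i))
   + 2 * theta P * (\<Sum>i=0..T P - 2 - t. \<Sum>n=1..T P - 1 - t - i.
        alpha P ^ (n + i) * gam P (t + i + n))"

definition standing_assms :: "inv_data \<Rightarrow> bool" where
  "standing_assms P \<longleftrightarrow>
     T P \<ge> 2 \<and> 0 < alpha P \<and> alpha P \<le> 1 \<and> 0 < theta P \<and>
     (\<forall>t < T P. prob_space (dem P t) \<and> sets (dem P t) = sets borel \<and>
        (AE x in dem P t. 0 \<le> x) \<and> integrable (dem P t) (\<lambda>x. x)) \<and>
     (\<forall>t < T P. K P t \<ge> 0) \<and>
     (\<forall>t < T P. convex_on UNIV (C P t) \<and> filterlim (C P t) at_top at_infinity) \<and>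
     (\<forall>t. t + 1 < T P \<longrightarrow> K P t \<ge> alpha P * K P (Suc t)) \<and>
     (\<forall>t < T P. gam P t \<ge> 0 \<and> (\<forall>x y. \<bar>C P t x - C P t y\<bar> \<le> gam P t * \<bar>x - y\<bar>))"

end

theory Submission
  imports Defs
begin


lemma sa_theta: "standing_assms P \<Longrightarrow> 0 < theta P"
  by (simp add: standing_assms_def)
lemma sa_alpha: "standing_assms P \<Longrightarrow> 0 < alpha P"
  by (simp add: standing_assms_def)
lemma sa_T: "standing_assms P \<Longrightarrow> 2 \<le> T P"
  by (simp add: standing_assms_def)
lemma sa_gam: "standing_assms P \<Longrightarrow> t < T P \<Longrightarrow> 0 \<le> gam P t"
  by (simp add: standing_assms_def)
lemma sa_prob: "standing_assms P \<Longrightarrow> t < T P \<Longrightarrow> prob_space (dem P t) \<and> sets (dem P t) = sets borel"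
  by (simp add: standing_assms_def)

lemma F_nonneg: "0 \<le> F P t x"
  by (simp add: F_def)

lemma F_le1: "standing_assms P \<Longrightarrow> t < T P \<Longrightarrow> F P t x \<le> 1"
  unfolding F_def using sa_prob prob_space.prob_le_1 by blast

lemma F_mono: "standing_assms P \<Longrightarrow> t < T P \<Longrightarrow> x \<le> y \<Longrightarrow> F P t x \<le> F P t y"
proof -
  assume a: "standing_assms P" "t < T P" "x \<le> y"
  then have ps: "prob_space (dem P t)" and se: "sets (dem P t) = sets borel" using sa_prob by auto
  have "{..y} \<in> sets (dem P t)" using se by simp
  moreover have "{..x} \<subseteq> {..y}" using a by auto
  ultimately show ?thesis unfolding F_def
    using ps prob_space.finite_measure finite_measure.finite_measure_mono by blast
qed

lemma z_diff: "z P a - z P b = z P (a - b)" by (simp add: z_def algebra_simps)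
lemma z_add: "z P a + z P b = z P (a + b)" by (simp add: z_def algebra_simps)
lemma z_minus1: "z P (n - 1) = z P n - theta P" by (simp add: z_def algebra_simps)
lemma z_plus1: "z P (n + 1) = z P n + theta P" by (simp add: z_def algebra_simps)

lemma z_mono: "standing_assms P \<Longrightarrow> a \<le> b \<Longrightarrow> z P a \<le> z P b"
  using sa_theta by (simp add: z_def mult_right_mono)

lemma f_nonneg: "standing_assms P \<Longrightarrow> t < T P \<Longrightarrow> 0 \<le> f P t n"
  unfolding f_def using F_mono[of P t "z P n" "z P (n+1)"] z_mono[of P n "n+1"] by simp

lemma tele: "n \<ge> -1 \<Longrightarrow> (\<Sum>m\<in>{-1..n-1}. f P t m) = F P t (z P n) - F P t (z P (-1))"
proof (induction n rule: int_ge_induct)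
  case base then show ?case by simp
next
  case (step n)
  have "{-1..n+1-1} = insert n {-1..n-1}" using step by auto
  then show ?case using step by (simp add: f_def)
qed

lemma sumf_le: "(\<Sum>m\<in>{-1..n-1}. f P t m) \<le> F P t (z P n)"
proof (cases "n \<ge> -1")
  case True then show ?thesis using tele[OF True, of P t] F_nonneg[of P t "z P (-1)"] by simp
next
  case False then have "{-1..n-1} = {}" by auto
  then show ?thesis using F_nonneg by simp
qed

lemma tele_nat: "(\<Sum>k<N. f P t (int k - 1)) = F P t (z P (int N - 1)) - F P t (z P (-1))"
  by (induction N) (simp_all add: f_def)

lemma series:
  assumes sa: "standing_assms P" and t: "t < T P" and g: "\<And>k. 0 \<le> g k \<and> g k \<le> M"
  shows "0 \<le> (\<Sum>k. g k * f P t (int k - 1)) \<and> (\<Sum>k. g k * f P t (int k - 1)) \<le> M"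
proof -
  have M: "0 \<le> M" using g[of 0] by linarith
  have fn: "\<And>k. 0 \<le> f P t (int k - 1)" using f_nonneg[OF sa t] by blast
  have sf: "summable (\<lambda>k. f P t (int k - 1))"
  proof (rule summableI_nonneg_bounded[where x=1])
    show "\<And>n. 0 \<le> f P t (int n - 1)" by (rule fn)
    show "\<And>n. sum (\<lambda>k. f P t (int k - 1)) {..<n} \<le> 1"
      unfolding tele_nat using F_le1[OF sa t] F_nonneg by (smt (verit))
  qed
  have sf1: "(\<Sum>k. f P t (int k - 1)) \<le> 1"
    apply (rule suminf_le_const[OF sf])
    unfolding tele_nat using F_le1[OF sa t] F_nonneg by (smt (verit))
  have sMf: "summable (\<lambda>k. M * f P t (int k - 1))" using sf summable_mult by blast
  have sg: "summable (\<lambda>k. g k * f P t (int k - 1))"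
    apply (rule summable_comparison_test'[OF sMf, where N=0])
    using g fn by (simp add: abs_mult mult_right_mono)
  have "(\<Sum>k. g k * f P t (int k - 1)) \<le> (\<Sum>k. M * f P t (int k - 1))"
    apply (rule suminf_le[OF _ sg sMf]) using g fn by (simp add: mult_right_mono)
  also have "\<dots> = M * (\<Sum>k. f P t (int k - 1))" using suminf_mult[OF sf] by simp
  also have "\<dots> \<le> M" using sf1 M by (simp add: mult_left_le)
  finally have u: "(\<Sum>k. g k * f P t (int k - 1)) \<le> M" .
  have "0 \<le> (\<Sum>k. g k * f P t (int k - 1))"
    apply (rule suminf_nonneg[OF sg]) using g fn by simp
  with u show ?thesis by simp
qed

lemma nidx_prop:
  assumes sa: "standing_assms P"
  shows "z P (nidx P t y - 1) \<le> y - s P (Suc t) \<and> y - s P (Suc t) < z P (nidx P t y)"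
proof -
  define v where "v = y - s P (Suc t)"
  have th: "0 < theta P" using sa_theta[OF sa] .
  define n where "n = \<lfloor>v / theta P\<rfloor> + 1"
  have n1: "n - 1 = \<lfloor>v / theta P\<rfloor>" by (simp add: n_def)
  have z1: "z P (n - 1) = of_int \<lfloor>v / theta P\<rfloor> * theta P" unfolding n1 z_def ..
  have z2: "z P n = (of_int \<lfloor>v / theta P\<rfloor> + 1) * theta P" unfolding n_def z_def by simp
  have p: "z P (n - 1) \<le> v \<and> v < z P n"
    unfolding z1 z2 using floor_divide_lower[OF th, of v] floor_divide_upper[OF th, of v] by simp
  have u: "m = n" if "z P (m - 1) \<le> v \<and> v < z P m" for m
  proof -
    have "real_of_int (m - 1) \<le> v / theta P" using that th unfolding z_def by (simp add: pos_le_divide_eq)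
    moreover have "v / theta P < real_of_int (m - 1) + 1" using that th unfolding z_def by (simp add: pos_divide_less_eq)
    ultimately have "\<lfloor>v / theta P\<rfloor> = m - 1" by (rule floor_unique)
    then show ?thesis unfolding n_def by simp
  qed
  have "nidx P t y = n" unfolding nidx_def v_def[symmetric]
    by (rule the_equality[where P="\<lambda>m. z P (m - 1) \<le> v \<and> v < z P m", OF p]) (rule u)
  then show ?thesis using p v_def by simp
qed

lemma if_range: "(if (cc::bool) then z P a else z P b) \<in> range (z P)" by simp

lemma s_grid: assumes "t < T P - 1" shows "s P t \<in> range (z P)"
proof -
  have nl: "\<not> T P - 1 \<le> t" using assms by simp
  show ?thesis
    unfolding s_def
    apply (subst HSs.simps)
    apply (simp only: if_not_P[OF nl] Let_def snd_conv)
    apply (rule if_range)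
    done
qed

lemma SU_grid: "SU P t \<in> range (z P)"
  unfolding SU_def by simp



definition Bp :: "inv_data \<Rightarrow> nat \<Rightarrow> real \<Rightarrow> real" where
  "Bp P t y = theta P * (\<Sum>n=1..T P - 1 - t. alpha P ^ n * gam P (t + n) *
        (\<Prod>m=0..n - 1. F P (t + m) (y + real (m + 1) * theta P - s P (t + m + 1))))"

lemma Bp_term: "T P - 1 \<le> t \<Longrightarrow> Bp P t y = 0"
  unfolding Bp_def by simp

lemma Bp_rec:
  assumes "Suc t < T P"
  shows "Bp P t y = alpha P * F P t (y + theta P - s P (Suc t)) * (gam P (Suc t) * theta P + Bp P (Suc t) (y + theta P))"
proof -
  define N where "N = T P - 1 - Suc t"
  have NT: "T P - 1 - t = Suc N" using assms N_def by simp
  define g where "g n = alpha P ^ n * gam P (t + n) * (\<Prod>m=0..n - 1. F P (t + m) (y + real (m + 1) * theta P - s P (t + m + 1)))" for n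
  define g' where "g' n = alpha P ^ n * gam P (Suc t + n) * (\<Prod>m=0..n - 1. F P (Suc t + m) (y + theta P + real (m + 1) * theta P - s P (Suc t + m + 1)))" for n
  define a where "a = F P t (y + theta P - s P (Suc t))"
  have B1: "Bp P t y = theta P * (\<Sum>n=1..Suc N. g n)" unfolding Bp_def g_def NT ..
  have B2: "Bp P (Suc t) (y + theta P) = theta P * (\<Sum>n=1..N. g' n)" unfolding Bp_def g'_def N_def ..
  have "(\<Sum>n=1..Suc N. g n) = (\<Sum>n=0..N. g (Suc n))"
    using sum.atLeast_Suc_atMost_Suc_shift[of g 0 N] by simp
  also have "\<dots> = g 1 + (\<Sum>n=1..N. g (Suc n))" by (simp add: sum.atLeast_Suc_atMost)
  finally have S1: "(\<Sum>n=1..Suc N. g n) = g 1 + (\<Sum>n=1..N. g (Suc n))" .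
  have S2: "(\<Sum>n=1..N. g (Suc n)) = (\<Sum>n=1..N. alpha P * a * g' n)"
  proof (rule sum.cong[OF refl])
    fix n assume "n \<in> {1..N}"
    then obtain k where k: "n = Suc k" by (cases n) auto
    have e: "F P (t + Suc i) (y + real (Suc i + 1) * theta P - s P (t + Suc i + 1)) =
        F P (Suc t + i) (y + theta P + real (i + 1) * theta P - s P (Suc t + i + 1))" for i
    proof -
      have "y + real (Suc i + 1) * theta P = y + theta P + real (i + 1) * theta P"
        by (simp add: ring_distribs)
      moreover have "t + Suc i = Suc t + i" by simp
      ultimately show ?thesis by (simp add: add.assoc)
    qed
    have pe: "(\<Prod>i=0..k. F P (t + Suc i) (y + real (Suc i + 1) * theta P - s P (t + Suc i + 1))) =
       (\<Prod>m=0..k. F P (Suc t + m) (y + theta P + real (m + 1) * theta P - s P (Suc t + m + 1)))"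
      by (intro prod.cong refl e)
    have "(\<Prod>m=0..Suc k. F P (t + m) (y + real (m + 1) * theta P - s P (t + m + 1))) =
       F P (t + 0) (y + real (0 + 1) * theta P - s P (t + 0 + 1)) * (\<Prod>i=0..k. F P (t + Suc i) (y + real (Suc i + 1) * theta P - s P (t + Suc i + 1)))"
      by (simp only: prod.atLeast0_atMost_Suc_shift comp_def)
    also have "\<dots> = a * (\<Prod>m=0..k. F P (Suc t + m) (y + theta P + real (m + 1) * theta P - s P (Suc t + m + 1)))"
      unfolding pe by (simp add: a_def)
    finally have "(\<Prod>m=0..Suc k. F P (t + m) (y + real (m + 1) * theta P - s P (t + m + 1))) =
       a * (\<Prod>m=0..k. F P (Suc t + m) (y + theta P + real (m + 1) * theta P - s P (Suc t + m + 1)))" .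
    then show "g (Suc n) = alpha P * a * g' n" unfolding g_def g'_def k by simp
  qed
  have S3: "g 1 = alpha P * a * gam P (Suc t)" unfolding g_def a_def by simp
  have S: "(\<Sum>n=1..Suc N. g n) = alpha P * a * (gam P (Suc t) + (\<Sum>n=1..N. g' n))"
    unfolding S1 S2 S3 sum_distrib_left[symmetric] by (simp add: distrib_left)
  show ?thesis unfolding B1 B2 S a_def[symmetric] by (simp add: algebra_simps)
qed

lemma Bp_mono:
  assumes sa: "standing_assms P" and xy: "x \<le> y"
  shows "Bp P t x \<le> Bp P t y"
  unfolding Bp_def
proof (rule mult_left_mono[OF sum_mono less_imp_le[OF sa_theta[OF sa]]])
  fix n assume n: "n \<in> {1..T P - 1 - t}"
  have g: "0 \<le> alpha P ^ n * gam P (t + n)"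
    using sa_alpha[OF sa] sa_gam[OF sa, of "t+n"] n by auto
  show "alpha P ^ n * gam P (t + n) * (\<Prod>m = 0..n - 1. F P (t + m) (x + real (m + 1) * theta P - s P (t + m + 1)))
         \<le> alpha P ^ n * gam P (t + n) * (\<Prod>m = 0..n - 1. F P (t + m) (y + real (m + 1) * theta P - s P (t + m + 1)))"
  proof (rule mult_left_mono[OF prod_mono g])
    fix m assume "m \<in> {0..n-1}"
    then have "t + m < T P" using n by auto
    then show "0 \<le> F P (t + m) (x + real (m + 1) * theta P - s P (t + m + 1)) \<and>
          F P (t + m) (x + real (m + 1) * theta P - s P (t + m + 1)) \<le> F P (t + m) (y + real (m + 1) * theta P - s P (t + m + 1))"
      using F_nonneg F_mono[OF sa] xy by simp
  qed
qed

lemma Bp_nonneg: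
  assumes sa: "standing_assms P"
  shows "0 \<le> Bp P t x"
  unfolding Bp_def
proof (rule mult_nonneg_nonneg[OF less_imp_le[OF sa_theta[OF sa]] sum_nonneg])
  fix n assume n: "n \<in> {1..T P - 1 - t}"
  have g: "0 \<le> alpha P ^ n * gam P (t + n)"
    using sa_alpha[OF sa] sa_gam[OF sa, of "t+n"] n by auto
  show "0 \<le> alpha P ^ n * gam P (t + n) * (\<Prod>m = 0..n - 1. F P (t + m) (x + real (m + 1) * theta P - s P (t + m + 1)))"
    using g by (simp add: F_nonneg prod_nonneg)
qed

function Urec :: "inv_data \<Rightarrow> nat \<Rightarrow> real \<Rightarrow> real" where
  "Urec P t y = (if T P - 1 \<le> t then 0 else gam P t * theta P + Bp P t (SU P t) + Bp P t (max y (SU P t))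
      + alpha P * Urec P (Suc t) (max y (SU P t) + theta P))"
  by pat_completeness auto
termination by (relation "Wellfounded.measure (\<lambda>(P, t, y). T P - t)") auto

declare Urec.simps[simp del]

lemma Urec_props:
  "standing_assms P \<Longrightarrow> 0 \<le> Urec P t x \<and> (x \<le> y \<longrightarrow> Urec P t x \<le> Urec P t y)"
proof (induction P t x arbitrary: y rule: Urec.induct)
  case (1 P t x)
  have sa: "standing_assms P" by fact
  show ?case
  proof (cases "T P - 1 \<le> t")
    case True then show ?thesis by (subst (1 2 3) Urec.simps) simp
  next
    case False
    have tT: "t < T P" using False by simp
    have IH: "\<And>y'. 0 \<le> Urec P (Suc t) (max x (SU P t) + theta P) \<and> (max x (SU P t) + theta P \<le> y' \<longrightarrow> Urec P (Suc t) (max x (SU P t) + theta P) \<le> Urec P (Suc t) y')"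
      using 1 False by blast
    have a: "0 < alpha P" using sa_alpha[OF sa] .
    have g: "0 \<le> gam P t * theta P" using sa_gam[OF sa tT] sa_theta[OF sa] by simp
    have "0 \<le> Urec P t x"
      apply (subst Urec.simps) using False IH[of "max x (SU P t) + theta P"] a g Bp_nonneg[OF sa]
      by simp
    moreover have "Urec P t x \<le> Urec P t y" if xy: "x \<le> y"
    proof -
      have m: "max x (SU P t) \<le> max y (SU P t)" using xy by simp
      have "alpha P * Urec P (Suc t) (max x (SU P t) + theta P) \<le> alpha P * Urec P (Suc t) (max y (SU P t) + theta P)"
        using IH[of "max y (SU P t) + theta P"] m a by simp
      moreover have "Bp P t (max x (SU P t)) \<le> Bp P t (max y (SU P t))" using Bp_mono[OF sa m] .
      ultimately show ?thesis using False by (subst (1 2) Urec.simps) simp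
    qed
    ultimately show ?thesis by blast
  qed
qed

primrec mu' :: "inv_data \<Rightarrow> nat \<Rightarrow> real \<Rightarrow> nat \<Rightarrow> real" where
  "mu' P t y 0 = y"
| "mu' P t y (Suc i) = max (mu' P t y i) (SU P (t + i)) + theta P"

lemma mu'_shift: "mu' P t y (Suc i) = mu' P (Suc t) (max y (SU P t) + theta P) i"
  by (induction i) simp_all

lemma mu_mu': "mu P t j i = mu' P t (z P j) i"
  by (induction i) simp_all

definition uterm :: "inv_data \<Rightarrow> nat \<Rightarrow> real \<Rightarrow> nat \<Rightarrow> real" where
  "uterm P t y i = alpha P ^ i * (gam P (t + i) * theta P + Bp P (t + i) (SU P (t + i))
     + Bp P (t + i) (max (mu' P t y i) (SU P (t + i))))"

lemma Urec_closed:
  assumes "T P - 2 - t = d" "t \<le> T P - 2" "2 \<le> T P"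
  shows "Urec P t y = (\<Sum>i=0..d. uterm P t y i)"
  using assms
proof (induction d arbitrary: t y)
  case 0
  then have t: "t = T P - 2" by simp
  have "Urec P (Suc t) x = 0" for x using 0 by (subst Urec.simps) simp
  then show ?case using 0 by (subst Urec.simps) (simp add: uterm_def)
next
  case (Suc d)
  have IH: "Urec P (Suc t) y' = (\<Sum>i=0..d. uterm P (Suc t) y' i)" for y'
    using Suc by simp
  have ut: "alpha P * uterm P (Suc t) (max y (SU P t) + theta P) i = uterm P t y (Suc i)" for i
    unfolding uterm_def by (simp add: mu'_shift del: mu'.simps(2))
  have "Urec P t y = uterm P t y 0 + alpha P * Urec P (Suc t) (max y (SU P t) + theta P)"
    using Suc.prems by (subst Urec.simps) (simp add: uterm_def)
  also have "\<dots> = uterm P t y 0 + (\<Sum>i=0..d. uterm P t y (Suc i))" by (simp add: IH sum_distrib_left ut)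
  also have "\<dots> = (\<Sum>i=0..Suc d. uterm P t y i)" by (simp only: sum.atLeast0_atMost_Suc_shift comp_def)
  finally show ?case .
qed

lemma alg: "(a::real) ^ i * (g * th + (th * (\<Sum>n\<in>A. a ^ n * Gm n * p1 n) + th * (\<Sum>n\<in>A. a ^ n * Gm n * p2 n)))
   = th * (a ^ i * g) + th * (\<Sum>n\<in>A. a ^ (n + i) * Gm n * (p1 n + p2 n))"
  by (simp add: sum_distrib_left sum.distrib[symmetric] power_add algebra_simps)

lemma uterm_expand: "uterm P t (z P j) i = theta P * (alpha P ^ i * gam P (t+i)) + theta P * (\<Sum>n=1..T P - 1 - t - i.
        alpha P ^ (n + i) * gam P (t + i + n) *
        ((\<Prod>m=0..n - 1. F P (t + i + m) (SU P (t + i) + real (m + 1) * theta P - s P (t + i + m + 1)))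
       + (\<Prod>m=0..n - 1. F P (t + i + m)
            (max (mu' P t (z P j) i) (SU P (t + i)) + real (m + 1) * theta P - s P (t + i + m + 1)))))"
  unfolding uterm_def Bp_def diff_diff_left add.assoc by (rule alg)

lemma U_eq: "U_omega P t j = (\<Sum>i=0..T P - 2 - t. uterm P t (z P j) i)"
  unfolding U_omega_def mu_mu' by (simp only: uterm_expand sum.distrib sum_distrib_left)



declare phiG.simps[simp del] omegabar.simps[simp del]

lemma phi0: "phiG P e t 0 y = 0"
proof (induction P e t arbitrary: y rule: phiG.induct)
  case (1 P e t)
  show ?case
  proof (cases "T P - 1 \<le> t")
    case True then show ?thesis by (subst phiG.simps) simp
  next
    case False
    have IH: "\<And>y. phiG P e (Suc t) 0 y = 0" using 1 False by blast
    show ?thesis using False by (subst phiG.simps) (simp add: psi_step_def IH)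
  qed
qed

lemma psi_bound:
  assumes sa: "standing_assms P" and t: "Suc t < T P" and y: "y \<in> range (z P)"
   and ph: "\<And>y. y \<in> range (z P) \<Longrightarrow> 0 \<le> ph (theta P) y \<and> ph (theta P) y \<le> gam P (Suc t) * theta P + Bp P (Suc t) y"
  shows "gam P t * theta P \<le> psi_step P t ph (theta P) y \<and> psi_step P t ph (theta P) y \<le> gam P t * theta P + Bp P t y"
proof (cases "y < s P (Suc t) - theta P")
  case True then show ?thesis using Bp_nonneg[OF sa] by (simp add: psi_step_def)
next
  case False
  define n where "n = nidx P t y"
  define M where "M = gam P (Suc t) * theta P + Bp P (Suc t) (y + theta P)"
  define S where "S = (\<Sum>m\<in>{-1..n-1}. ph (theta P) (y - z P m) * f P t m)"
  have tT: "t < T P" using t by simp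
  have th: "0 < theta P" using sa_theta[OF sa] .
  have M0: "0 \<le> M" using sa_gam[OF sa t] th Bp_nonneg[OF sa] unfolding M_def by simp
  obtain a where ya: "y = z P a" using y by auto
  have tm: "0 \<le> ph (theta P) (y - z P m) * f P t m \<and> ph (theta P) (y - z P m) * f P t m \<le> M * f P t m"
    if "m \<in> {-1..n-1}" for m
  proof -
    have g: "y - z P m \<in> range (z P)" unfolding ya z_diff by simp
    have "z P (-1) \<le> z P m" using that z_mono[OF sa] by simp
    then have "y - z P m \<le> y + theta P" by (simp add: z_def)
    then have "Bp P (Suc t) (y - z P m) \<le> Bp P (Suc t) (y + theta P)" by (rule Bp_mono[OF sa])
    then have "0 \<le> ph (theta P) (y - z P m) \<and> ph (theta P) (y - z P m) \<le> M" using ph[OF g] unfolding M_def by simp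
    then show ?thesis using f_nonneg[OF sa tT, of m] by (simp add: mult_right_mono)
  qed
  have s1: "S \<le> M * F P t (y + theta P - s P (Suc t))"
  proof -
    have "S \<le> (\<Sum>m\<in>{-1..n-1}. M * f P t m)" unfolding S_def using tm by (intro sum_mono) simp
    also have "\<dots> = M * (\<Sum>m\<in>{-1..n-1}. f P t m)" by (simp add: sum_distrib_left)
    also have "\<dots> \<le> M * F P t (z P n)" using sumf_le M0 by (intro mult_left_mono) auto
    also have "\<dots> \<le> M * F P t (y + theta P - s P (Suc t))"
    proof -
      have "z P (n - 1) \<le> y - s P (Suc t)" using nidx_prop[OF sa, of t y] n_def by simp
      then have "z P n \<le> y + theta P - s P (Suc t)" using z_minus1[of P n] by simp
      then show ?thesis using F_mono[OF sa tT] M0 by (intro mult_left_mono) auto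
    qed
    finally show ?thesis .
  qed
  have s0: "0 \<le> S" unfolding S_def using tm by (intro sum_nonneg) simp
  have rec: "Bp P t y = alpha P * (M * F P t (y + theta P - s P (Suc t)))" using Bp_rec[OF t] M_def by simp
  have a: "0 < alpha P" using sa_alpha[OF sa] .
  have aS: "alpha P * S \<le> alpha P * (M * F P t (y + theta P - s P (Suc t)))"
    by (rule mult_left_mono[OF s1]) (use a in simp)
  have aS0: "0 \<le> alpha P * S" using a s0 by simp
  have "psi_step P t ph (theta P) y = gam P t * theta P + alpha P * S"
    using False unfolding psi_step_def S_def n_def by simp
  then show ?thesis using aS aS0 rec by simp
qed

lemma phi_bound: "standing_assms P \<Longrightarrow> e = 0 \<or> e = theta P \<Longrightarrow> t < T P \<Longrightarrow> y \<in> range (z P) \<Longrightarrow>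
  0 \<le> phiG P e t (theta P) y \<and> phiG P e t (theta P) y \<le> gam P t * theta P + Bp P t y"
proof (induction P e t arbitrary: y rule: phiG.induct)
  case (1 P e t)
  have sa: "standing_assms P" and e: "e = 0 \<or> e = theta P" and tT: "t < T P" and y: "y \<in> range (z P)"
    using "1.prems" by auto
  have th: "0 < theta P" using sa_theta[OF sa] .
  have g0: "0 \<le> gam P t * theta P" using sa_gam[OF sa tT] th by simp
  have B0: "0 \<le> Bp P t y" using Bp_nonneg[OF sa] .
  show ?case
  proof (cases "T P - 1 \<le> t")
    case True
    then have tt: "t = T P - 1" using tT by simp
    have "phiG P e t (theta P) y = (if y < s P (T P - 1) then 0 else gam P (T P - 1) * theta P)"
      using True by (subst phiG.simps) simp
    then show ?thesis using g0 B0 tt by simp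
  next
    case False
    have St: "Suc t < T P" using False tT by simp
    have IH: "\<And>y. y \<in> range (z P) \<Longrightarrow> 0 \<le> phiG P e (Suc t) (theta P) y \<and>
        phiG P e (Suc t) (theta P) y \<le> gam P (Suc t) * theta P + Bp P (Suc t) y"
      using "1.IH"[OF False] sa e St by blast
    have PS: "gam P t * theta P \<le> psi_step P t (phiG P e (Suc t)) (theta P) y \<and>
        psi_step P t (phiG P e (Suc t)) (theta P) y \<le> gam P t * theta P + Bp P t y"
      by (rule psi_bound[where ph="phiG P e (Suc t)", OF sa St y IH])
    obtain b where sb: "s P t = z P b" using s_grid[of t P] False by auto
    obtain a where ya: "y = z P a" using y by auto
    have eq: "phiG P e t (theta P) y = (if y < s P t then 0 else if y - theta P < s P t
        then psi_step P t (phiG P e (Suc t)) (y - s P t + e) y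
        else psi_step P t (phiG P e (Suc t)) (theta P) y)"
      using False by (subst phiG.simps) simp
    show ?thesis
    proof (cases "y < s P t")
      case True then show ?thesis using eq g0 B0 by simp
    next
      case c1: False
      show ?thesis
      proof (cases "y - theta P < s P t")
        case c2: True
        have "real_of_int b * theta P \<le> real_of_int a * theta P" using c1 unfolding sb ya z_def by simp
        then have ba: "real_of_int b \<le> real_of_int a" using th by simp
        have "(real_of_int a - 1) * theta P < real_of_int b * theta P" using c2 unfolding sb ya z_def
          by (simp add: algebra_simps)
        then have "real_of_int a - 1 < real_of_int b" using th by simp
        with ba have "a = b" by linarith
        then have ys: "y - s P t + e = e" using sb ya by simp
        show ?thesis
        proof (cases "e = 0")
          case True
          have "psi_step P t (phiG P e (Suc t)) 0 y = 0" by (simp add: psi_step_def phi0)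
          then show ?thesis using eq c1 c2 ys True g0 B0 by simp
        next
          case False
          then have "e = theta P" using e by simp
          then show ?thesis using eq c1 c2 ys PS g0 by simp
        qed
      next
        case c2: False
        show ?thesis using eq c1 c2 PS g0 by simp
      qed
    qed
  qed
qed

lemma omega_bound: "standing_assms P \<Longrightarrow> t < T P \<Longrightarrow> x \<in> range (z P) \<Longrightarrow>
    0 \<le> omegabar P t x \<and> omegabar P t x \<le> Urec P t x"
proof (induction P t arbitrary: x rule: omegabar.induct)
  case (1 P t)
  have sa: "standing_assms P" and tT: "t < T P" and xg: "x \<in> range (z P)"
    using "1.prems" by auto
  have th: "0 < theta P" using sa_theta[OF sa] .
  have a: "0 < alpha P" using sa_alpha[OF sa] .
  show ?case
  proof (cases "T P - 1 \<le> t")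
    case True
    have "omegabar P t x = 0" using True by (subst omegabar.simps) simp
    moreover have "Urec P t x = 0" using True by (subst Urec.simps) simp
    ultimately show ?thesis by simp
  next
    case False
    have St: "Suc t < T P" using False tT by simp
    define ob where "ob = omegabar P (Suc t)"
    define om where "om = omega_step P t ob"
    have IH: "\<And>x. x \<in> range (z P) \<Longrightarrow> 0 \<le> ob x \<and> ob x \<le> Urec P (Suc t) x"
      unfolding ob_def using "1.IH"[OF False] sa St by blast
    have g0: "0 \<le> gam P t * theta P" using sa_gam[OF sa tT] th by simp
    have psb: "gam P t * theta P \<le> psi_step P t (phiG P e (Suc t)) (theta P) x \<and>
        psi_step P t (phiG P e (Suc t)) (theta P) x \<le> gam P t * theta P + Bp P t x"
      if "e = 0 \<or> e = theta P" "x \<in> range (z P)" for e x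
      by (rule psi_bound[where ph="phiG P e (Suc t)", OF sa St that(2) phi_bound[OF sa that(1) St]])
    have omb: "0 \<le> om x \<and> om x \<le> Bp P t x + alpha P * Urec P (Suc t) (x + theta P)"
      if xg: "x \<in> range (z P)" for x
    proof -
      obtain c0 where xa: "x = z P c0" using xg by auto
      have gk: "0 \<le> ob (x - z P (int k - 1)) \<and> ob (x - z P (int k - 1)) \<le> Urec P (Suc t) (x + theta P)" for k
      proof -
        have gr: "x - z P (int k - 1) \<in> range (z P)" unfolding xa z_diff by simp
        have "z P (-1) \<le> z P (int k - 1)" using z_mono[OF sa] by simp
        then have "x - z P (int k - 1) \<le> x + theta P" by (simp add: z_def)
        then have "Urec P (Suc t) (x - z P (int k - 1)) \<le> Urec P (Suc t) (x + theta P)"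
          using Urec_props[OF sa] by blast
        then show ?thesis using IH[OF gr] by simp
      qed
      have ser: "0 \<le> (\<Sum>k. ob (x - z P (int k - 1)) * f P t (int k - 1)) \<and>
          (\<Sum>k. ob (x - z P (int k - 1)) * f P t (int k - 1)) \<le> Urec P (Suc t) (x + theta P)"
        by (rule series[OF sa tT gk])
      have ps: "psi P t (theta P) x = psi_step P t (phiG P 0 (Suc t)) (theta P) x"
        using False unfolding psi_def phi_def by simp
      have om_eq: "om x = psi P t (theta P) x - gam P t * theta P
          + alpha P * (\<Sum>k. ob (x - z P (int k - 1)) * f P t (int k - 1))"
        unfolding om_def omega_step_def ..
      have "alpha P * (\<Sum>k. ob (x - z P (int k - 1)) * f P t (int k - 1)) \<le> alpha P * Urec P (Suc t) (x + theta P)"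
        using ser a by (intro mult_left_mono) auto
      moreover have "0 \<le> alpha P * (\<Sum>k. ob (x - z P (int k - 1)) * f P t (int k - 1))"
        using ser a by simp
      ultimately show ?thesis using om_eq ps psb[of 0 x] xg by simp
    qed
    define SUt where "SUt = SU P t"
    have SUg: "SUt \<in> range (z P)" unfolding SUt_def by (rule SU_grid)
    have pbar: "psibar P t (theta P) SUt = psi_step P t (phiG P (theta P) (Suc t)) (theta P) SUt"
      using False unfolding psibar_def phibar_def by simp
    define et where "et = psibar P t (theta P) SUt + om SUt"
    have et0: "0 \<le> et" unfolding et_def using pbar psb[of "theta P" SUt] SUg omb[OF SUg] g0 by simp
    have et1: "et \<le> gam P t * theta P + Bp P t SUt + Bp P t SUt + alpha P * Urec P (Suc t) (SUt + theta P)"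
      unfolding et_def using pbar psb[of "theta P" SUt] SUg omb[OF SUg] by simp
    have obt: "omegabar P t x = (if x \<le> SUt then et else max et (om x))"
      using False unfolding et_def om_def ob_def SUt_def by (subst omegabar.simps) (simp add: Let_def)
    have U: "Urec P t x = gam P t * theta P + Bp P t SUt + Bp P t (max x SUt)
        + alpha P * Urec P (Suc t) (max x SUt + theta P)"
      using False unfolding SUt_def by (subst Urec.simps) simp
    show ?thesis
    proof (cases "x \<le> SUt")
      case True
      then have "max x SUt = SUt" by simp
      then show ?thesis using obt U True et0 et1 by simp
    next
      case c: False
      then have mx: "max x SUt = x" by simp
      have b1: "Bp P t SUt \<le> Bp P t x" using c Bp_mono[OF sa] by simp
      have "Urec P (Suc t) (SUt + theta P) \<le> Urec P (Suc t) (x + theta P)" using c Urec_props[OF sa] by simp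
      then have b2: "alpha P * Urec P (Suc t) (SUt + theta P) \<le> alpha P * Urec P (Suc t) (x + theta P)"
        using a by simp
      have B0: "0 \<le> Bp P t SUt" using Bp_nonneg[OF sa] .
      show ?thesis using obt U c mx et0 et1 b1 b2 omb[OF xg] g0 B0 by simp
    qed
  qed
qed

lemma U_le: assumes sa: "standing_assms P" shows "U_omega P t j \<le> Ubar_omega P t"
proof -
  have th: "0 < theta P" using sa_theta[OF sa] .
  define X where "X i n = alpha P ^ (n + i) * gam P (t + i + n) *
        ((\<Prod>m=0..n - 1. F P (t + i + m) (SU P (t + i) + real (m + 1) * theta P - s P (t + i + m + 1)))
       + (\<Prod>m=0..n - 1. F P (t + i + m)
            (max (mu P t j i) (SU P (t + i)) + real (m + 1) * theta P - s P (t + i + m + 1))))" for i n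
  define Y where "Y i n = alpha P ^ (n + i) * gam P (t + i + n)" for i n
  have XY: "X i n \<le> 2 * Y i n" if i: "i \<in> {0..T P - 2 - t}" and n: "n \<in> {1..T P - 1 - t - i}" for i n
  proof -
    have idx: "t + i + m < T P" if "m \<in> {0..n-1}" for m using that n by auto
    have p1: "(\<Prod>m=0..n - 1. F P (t + i + m) (SU P (t + i) + real (m + 1) * theta P - s P (t + i + m + 1))) \<le> 1"
      by (rule prod_le_1) (use idx F_nonneg F_le1[OF sa] in auto)
    have p2: "(\<Prod>m=0..n - 1. F P (t + i + m)
            (max (mu P t j i) (SU P (t + i)) + real (m + 1) * theta P - s P (t + i + m + 1))) \<le> 1"
      by (rule prod_le_1) (use idx F_nonneg F_le1[OF sa] in auto)
    have "t + i + n < T P" using n by auto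
    then have "0 \<le> Y i n" unfolding Y_def using sa_gam[OF sa] sa_alpha[OF sa] by simp
    then have "Y i n * (p + q) \<le> Y i n * 2" if "p \<le> 1" "q \<le> 1" for p q
      using that by (intro mult_left_mono) auto
    from this[OF p1 p2] show ?thesis unfolding X_def Y_def by (simp add: mult.commute)
  qed
  have "(\<Sum>i=0..T P - 2 - t. \<Sum>n=1..T P - 1 - t - i. X i n) \<le> (\<Sum>i=0..T P - 2 - t. \<Sum>n=1..T P - 1 - t - i. 2 * Y i n)"
    using XY by (intro sum_mono) auto
  also have "\<dots> = 2 * (\<Sum>i=0..T P - 2 - t. \<Sum>n=1..T P - 1 - t - i. Y i n)" by (simp add: sum_distrib_left)
  finally have "theta P * (\<Sum>i=0..T P - 2 - t. \<Sum>n=1..T P - 1 - t - i. X i n) \<le>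
      2 * theta P * (\<Sum>i=0..T P - 2 - t. \<Sum>n=1..T P - 1 - t - i. Y i n)"
    using th by (simp add: mult_left_mono mult.assoc)
  then show ?thesis unfolding U_omega_def Ubar_omega_def X_def Y_def by simp
qed

theorem theorem4p3:
  fixes P :: inv_data
  assumes "standing_assms P"
  shows "\<forall>j::int. \<forall>t. t \<le> T P - 2 \<longrightarrow>
           omegabar P t (z P j) \<le> U_omega P t j \<and> U_omega P t j \<le> Ubar_omega P t"
proof (intro allI impI)
  fix j :: int and t assume t: "t \<le> T P - 2"
  have T2: "2 \<le> T P" using sa_T[OF assms] .
  have tT: "t < T P" using t T2 by simp
  have "omegabar P t (z P j) \<le> Urec P t (z P j)" using omega_bound[OF assms tT] by simp
  also have "\<dots> = U_omega P t j" using Urec_closed[OF refl t T2] U_eq by simp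
  finally show "omegabar P t (z P j) \<le> U_omega P t j \<and> U_omega P t j \<le> Ubar_omega P t"
    using U_le[OF assms] by simp
qed

end
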